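(* Let $\mathbf D_0\in\mathcal D$ and let $k,t$ satisfy $k\mu(t)<1/2$. Consider the signal model below with the additional assumptions $\sigma=0$ (no noise) and $\Pr(|[\boldsymbol\alpha_0]_j|>\overline\alpha\mid j\in J)=0$ for some $\overline\alpha\ge\underline\alpha>0$. Let $\mathbf x=\mathbf D_0\boldsymbol\alpha_0$ be generated according to this model, with support $J$, and let $\lambda$ satisfy $\frac{\sqrt k\,\overline\alpha}{2-Q_t^2}t<\lambda\le\frac49\underline\alpha$, and $0\le t'\le t$. Then almost surely, uniformly for all $(\mathbf W,\mathbf v)\in\mathcal W_{\mathbf D_0}\times\mathcal S^p$, writing $\mathbf D(t')=\mathbf D(\mathbf W,\mathbf v,t')$: the vector $\hat{\boldsymbol\alpha}(t')$ with $\hat{\boldsymbol\alpha}(t')_J=\big([\mathbf D(t')]_J^\top[\mathbf D(t')]_J\big)^{-1}\big([\mathbf D(t')]_J^\top\mathbf x-\lambda\,\mathrm{sign}([\boldsymbol\alpha_0]_J)\big)$ and $\hat{\boldsymbol\alpha}(t')_{J^c}=\mathbf 0$ is the unique solution of $\min_{\boldsymbol\alpha\in\mathbb R^p}\frac12\|\mathbf x-\mathbf D(t')\boldsymbol\alpha\|_2^2+\lambda\|\boldsymbol\alpha\|_1$, and $\mathrm{sign}(\hat{\boldsymbol\alpha}(t'))=\mathrm{sign}(\boldsymbol\alpha_0)$.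
   Context: $\mathcal D$: real $m\times p$ matrices with unit $\ell_2$-norm columns; $\mu_0=\max_{i\ne j}|[\mathbf d_0^i]^\top\mathbf d_0^j|$, $\mu(t)=\mu_0+3t$, $Q_t=1/\sqrt{1-k\mu(t)}$. $\mathcal S^p$ unit sphere; $\mathcal W_{\mathbf D_0}=\{\mathbf W:\mathrm{diag}(\mathbf W^\top\mathbf D_0)=\mathbf 0,\mathrm{diag}(\mathbf W^\top\mathbf W)=\mathbf 1\}$; $\mathbf D(\mathbf W,\mathbf v,t)=\mathbf D_0\mathrm{Diag}[\cos(\mathbf vt)]+\mathbf W\mathrm{Diag}[\sin(\mathbf vt)]$. Signal model: random support $J$ with $|J|=k$; $[\boldsymbol\alpha_0]_j=0$ off $J$ and, on $J$, i.i.d. copies of $\alpha$ with $\mathbb Ee^{s\alpha}\le e^{c^2s^2/2}$ for all $s$ ($\sigma_\alpha$ smallest such $c$) and $\Pr(|\alpha|<\underline\alpha)=0$; support and coefficients independent. *)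

theory Defs
  imports "HOL-Probability.Probability" "Jordan_Normal_Form.Gauss_Jordan_Elimination"
begin

text \<open>Matrices are m x p real matrices represented as functions D i j (row i < m, column j < p);
  vectors in R^p as functions nat => real (entries at indices >= p are irrelevant / zero).\<close>

definition inner_cols :: "nat \<Rightarrow> (nat \<Rightarrow> nat \<Rightarrow> real) \<Rightarrow> (nat \<Rightarrow> nat \<Rightarrow> real) \<Rightarrow> nat \<Rightarrow> nat \<Rightarrow> real" where
  "inner_cols m A B i j = (\<Sum>r<m. A r i * B r j)"

definition dict_set :: "nat \<Rightarrow> nat \<Rightarrow> (nat \<Rightarrow> nat \<Rightarrow> real) set" where
  "dict_set m p = {D. \<forall>j<p. inner_cols m D D j j = 1}"

text \<open>Coherence mu_0 (convention: 0 when p <= 1, where the max is over the empty set).\<close>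
definition coherence :: "nat \<Rightarrow> nat \<Rightarrow> (nat \<Rightarrow> nat \<Rightarrow> real) \<Rightarrow> real" where
  "coherence m p D = (if p \<le> 1 then 0 else
     Max {\<bar>inner_cols m D D i j\<bar> | i j. i < p \<and> j < p \<and> i \<noteq> j})"

definition mu_t :: "nat \<Rightarrow> nat \<Rightarrow> (nat \<Rightarrow> nat \<Rightarrow> real) \<Rightarrow> real \<Rightarrow> real" where
  "mu_t m p D0 t = coherence m p D0 + 3 * t"

definition Q_t :: "nat \<Rightarrow> nat \<Rightarrow> (nat \<Rightarrow> nat \<Rightarrow> real) \<Rightarrow> nat \<Rightarrow> real \<Rightarrow> real" where
  "Q_t m p D0 k t = 1 / sqrt (1 - real k * mu_t m p D0 t)"

definition unit_sphere_p :: "nat \<Rightarrow> (nat \<Rightarrow> real) set" where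
  "unit_sphere_p p = {v. (\<Sum>j<p. (v j)\<^sup>2) = 1}"

definition W_set :: "nat \<Rightarrow> nat \<Rightarrow> (nat \<Rightarrow> nat \<Rightarrow> real) \<Rightarrow> (nat \<Rightarrow> nat \<Rightarrow> real) set" where
  "W_set m p D0 = {W. \<forall>j<p. inner_cols m W D0 j j = 0 \<and> inner_cols m W W j j = 1}"

definition D_path :: "(nat \<Rightarrow> nat \<Rightarrow> real) \<Rightarrow> (nat \<Rightarrow> nat \<Rightarrow> real) \<Rightarrow> (nat \<Rightarrow> real) \<Rightarrow> real \<Rightarrow> nat \<Rightarrow> nat \<Rightarrow> real" where
  "D_path D0 W v t i j = D0 i j * cos (v j * t) + W i j * sin (v j * t)"

definition mat_vec :: "nat \<Rightarrow> (nat \<Rightarrow> nat \<Rightarrow> real) \<Rightarrow> (nat \<Rightarrow> real) \<Rightarrow> nat \<Rightarrow> real" where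
  "mat_vec p D a i = (\<Sum>j<p. D i j * a j)"

definition lasso_obj :: "nat \<Rightarrow> nat \<Rightarrow> (nat \<Rightarrow> nat \<Rightarrow> real) \<Rightarrow> (nat \<Rightarrow> real) \<Rightarrow> real \<Rightarrow> (nat \<Rightarrow> real) \<Rightarrow> real" where
  "lasso_obj m p D x lam a = 1/2 * (\<Sum>i<m. (x i - mat_vec p D a i)\<^sup>2) + lam * (\<Sum>j<p. \<bar>a j\<bar>)"

definition vec_in :: "nat \<Rightarrow> (nat \<Rightarrow> real) \<Rightarrow> bool" where
  "vec_in p a \<longleftrightarrow> (\<forall>j\<ge>p. a j = 0)"

definition unique_lasso_solution :: "nat \<Rightarrow> nat \<Rightarrow> (nat \<Rightarrow> nat \<Rightarrow> real) \<Rightarrow> (nat \<Rightarrow> real) \<Rightarrow> real \<Rightarrow> (nat \<Rightarrow> real) \<Rightarrow> bool" where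
  "unique_lasso_solution m p D x lam a \<longleftrightarrow> vec_in p a \<and>
     (\<forall>b. vec_in p b \<longrightarrow> lasso_obj m p D x lam a \<le> lasso_obj m p D x lam b) \<and>
     (\<forall>b. vec_in p b \<longrightarrow> lasso_obj m p D x lam b \<le> lasso_obj m p D x lam a \<longrightarrow> b = a)"

definition sub_cols :: "nat \<Rightarrow> (nat \<Rightarrow> nat \<Rightarrow> real) \<Rightarrow> nat set \<Rightarrow> real mat" where
  "sub_cols m D J = mat m (card J) (\<lambda>(i, l). D i (sorted_list_of_set J ! l))"

definition alpha_hat :: "nat \<Rightarrow> (nat \<Rightarrow> nat \<Rightarrow> real) \<Rightarrow> nat set \<Rightarrow> (nat \<Rightarrow> real) \<Rightarrow> real \<Rightarrow> (nat \<Rightarrow> real) \<Rightarrow> nat \<Rightarrow> real" where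
  "alpha_hat m D J x lam s =
    (let js = sorted_list_of_set J;
         DJ = sub_cols m D J;
         G = transpose_mat DJ * DJ;
         r = mult_mat_vec (transpose_mat DJ) (vec m x) - lam \<cdot>\<^sub>v vec (card J) (\<lambda>l. sgn (s (js ! l)));
         y = mult_mat_vec (the (mat_inverse G)) r
     in (\<lambda>j. if j \<in> J then vec_index y (card {i \<in> J. i < j}) else 0))"

end

theory Submission
  imports Defs "Jordan_Normal_Form.Determinant"
begin


lemma idx_nth:
  fixes J :: "nat set"
  assumes "finite J" "l < card J"
  shows "card {i\<in>J. i < sorted_list_of_set J ! l} = l"
proof -
  let ?xs = "sorted_list_of_set J"
  have len: "length ?xs = card J" by simp
  have sw: "sorted_wrt (<) ?xs" by simp
  have dist: "distinct ?xs" by simp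
  have st: "set ?xs = J" using assms by simp
  have "{i\<in>J. i < ?xs ! l} = (\<lambda>i. ?xs ! i) ` {..<l}"
  proof
    show "(\<lambda>i. ?xs ! i) ` {..<l} \<subseteq> {i\<in>J. i < ?xs ! l}"
    proof
      fix y assume "y \<in> (\<lambda>i. ?xs ! i) ` {..<l}"
      then obtain i where i: "i < l" "y = ?xs ! i" by auto
      have "?xs ! i < ?xs ! l" using sorted_wrt_nth_less[OF sw i(1)] assms len by simp
      moreover have "?xs ! i \<in> J" using st i assms len by (metis less_trans nth_mem)
      ultimately show "y \<in> {i\<in>J. i < ?xs ! l}" using i by simp
    qed
    show "{i\<in>J. i < ?xs ! l} \<subseteq> (\<lambda>i. ?xs ! i) ` {..<l}"
    proof
      fix y assume y: "y \<in> {i\<in>J. i < ?xs ! l}"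
      then obtain q where q: "q < length ?xs" "y = ?xs ! q" using st by (metis (no_types, lifting) in_set_conv_nth mem_Collect_eq)
      have "q < l"
      proof (rule ccontr)
        assume "\<not> q < l"
        hence "?xs ! l \<le> ?xs ! q" using sorted_nth_mono[of ?xs l q] q sorted_sorted_list_of_set by simp
        moreover have "?xs ! q < ?xs ! l" using y q by simp
        ultimately show False by linarith
      qed
      thus "y \<in> (\<lambda>i. ?xs ! i) ` {..<l}" using q by auto
    qed
  qed
  moreover have "inj_on (\<lambda>i. ?xs ! i) {..<l}"
    using dist assms len by (simp add: inj_on_def nth_eq_iff_index_eq)
  ultimately show ?thesis by (simp add: card_image)
qed

lemma idx_in:
  fixes J :: "nat set"
  assumes "finite J" "j \<in> J"
  shows "card {i\<in>J. i < j} < card J \<and> sorted_list_of_set J ! card {i\<in>J. i < j} = j"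
proof -
  obtain l where "l < card J" "sorted_list_of_set J ! l = j"
    using assms by (metis in_set_conv_nth length_sorted_list_of_set set_sorted_list_of_set)
  thus ?thesis using idx_nth[OF assms(1)] by auto
qed

lemma nth_in: "finite (J::nat set) \<Longrightarrow> l < card J \<Longrightarrow> sorted_list_of_set J ! l \<in> J"
  by (metis length_sorted_list_of_set nth_mem set_sorted_list_of_set)
lemma nth_in_old: "finite J \<Longrightarrow> l < card J \<Longrightarrow> sorted_list_of_set J ! l \<in> J"
  by (metis length_sorted_list_of_set nth_mem set_sorted_list_of_set)

lemma sum_reindex:
  assumes "finite J"
  shows "(\<Sum>l<card J. g (sorted_list_of_set J ! l)) = (\<Sum>i\<in>J. g i)"
proof -
  have "(\<Sum>i\<in>J. g i) = sum_list (map g (sorted_list_of_set J))"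
    using assms by (simp add: sum.distinct_set_conv_list[symmetric])
  also have "\<dots> = (\<Sum>l<card J. g (sorted_list_of_set J ! l))"
    by (simp add: sum_list_sum_nth atLeast0LessThan)
  finally show ?thesis by simp
qed

lemma alpha_hat_eq:
  assumes fin: "finite J"
  and inj: "\<And>u. (\<forall>j\<in>J. (\<Sum>i\<in>J. inner_cols m D D j i * u i) = 0) \<Longrightarrow> \<forall>j\<in>J. u j = 0"
  and jJ: "j \<in> J"
  shows "(\<Sum>i\<in>J. inner_cols m D D j i * alpha_hat m D J x lam s i) = (\<Sum>r<m. D r j * x r) - lam * sgn (s j)"
proof -
  define js where "js = sorted_list_of_set J"
  define n where "n = card J"
  define DJ where "DJ = sub_cols m D J"
  define G where "G = transpose_mat DJ * DJ"
  define rr where "rr = mult_mat_vec (transpose_mat DJ) (vec m x) - lam \<cdot>\<^sub>v vec n (\<lambda>l. sgn (s (js ! l)))"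
  define fv where "fv = (\<lambda>v::real vec. \<lambda>i. if i \<in> J then vec_index v (card {q\<in>J. q<i}) else 0)"
  have DJc: "DJ \<in> carrier_mat m n" unfolding DJ_def sub_cols_def n_def by (rule mat_carrier)
  have Gc: "G \<in> carrier_mat n n" unfolding G_def
    by (rule mult_carrier_mat[of _ _ m]) (use DJc in auto)
  have Gij: "\<And>a b. a < n \<Longrightarrow> b < n \<Longrightarrow> G $$ (a,b) = inner_cols m D D (js!a) (js!b)"
    unfolding G_def DJ_def sub_cols_def inner_cols_def js_def n_def by (simp add: scalar_prod_def lessThan_atLeast0)
  have rr_i: "\<And>a. a < n \<Longrightarrow> vec_index rr a = (\<Sum>r<m. D r (js!a) * x r) - lam * sgn (s (js!a))"
    unfolding rr_def DJ_def sub_cols_def js_def n_def by (simp add: scalar_prod_def lessThan_atLeast0)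
  have rrc: "rr \<in> carrier_vec n" unfolding rr_def
    by (rule minus_carrier_vec, rule mult_mat_vec_carrier[of _ _ m]) (use DJc in auto)
  have Gv: "vec_index (G *\<^sub>v v) a = (\<Sum>i\<in>J. inner_cols m D D (js!a) i * fv v i)"
    if v: "v \<in> carrier_vec n" and a: "a < n" for v a
  proof -
    have "vec_index (G *\<^sub>v v) a = row G a \<bullet> v" using Gc a by simp
    also have "\<dots> = (\<Sum>b\<in>{0..<n}. vec_index (row G a) b * vec_index v b)" using v by (simp add: scalar_prod_def)
    also have "\<dots> = (\<Sum>b<n. G $$ (a,b) * vec_index v b)"
      unfolding lessThan_atLeast0 by (intro sum.cong refl) (use Gc a in auto)
    also have "\<dots> = (\<Sum>b<n. inner_cols m D D (js!a) (js!b) * vec_index v b)" using Gij a by simp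
    also have "\<dots> = (\<Sum>b<n. (\<lambda>i. inner_cols m D D (js!a) i * fv v i) (js!b))"
      by (intro sum.cong refl) (simp add: fv_def js_def n_def idx_nth[OF fin] nth_in[OF fin])
    also have "\<dots> = (\<Sum>i\<in>J. inner_cols m D D (js!a) i * fv v i)"
      unfolding js_def n_def by (rule sum_reindex[OF fin])
    finally show ?thesis .
  qed
  have dG: "\<not> (\<exists>v. v \<in> carrier_vec n \<and> v \<noteq> 0\<^sub>v n \<and> G *\<^sub>v v = 0\<^sub>v n)"
  proof
    assume "\<exists>v. v \<in> carrier_vec n \<and> v \<noteq> 0\<^sub>v n \<and> G *\<^sub>v v = 0\<^sub>v n"
    then obtain v where v: "v \<in> carrier_vec n" "v \<noteq> 0\<^sub>v n" "G *\<^sub>v v = 0\<^sub>v n"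
      by auto
    have "\<forall>j\<in>J. (\<Sum>i\<in>J. inner_cols m D D j i * fv v i) = 0"
    proof
      fix j assume j: "j \<in> J"
      have a: "card {i\<in>J. i < j} < n" "js ! card {i\<in>J. i < j} = j" using idx_in[OF fin j] by (auto simp: n_def js_def)
      have "vec_index (G *\<^sub>v v) (card {i\<in>J. i < j}) = 0" using v a by simp
      thus "(\<Sum>i\<in>J. inner_cols m D D j i * fv v i) = 0" using Gv[OF v(1) a(1)] a by simp
    qed
    hence u0: "\<forall>j\<in>J. fv v j = 0" by (rule inj)
    have "v = 0\<^sub>v n"
    proof (rule eq_vecI)
      fix b assume "b < dim_vec (0\<^sub>v n :: real vec)"
      hence b: "b < n" by simp
      have "js ! b \<in> J" using nth_in[OF fin] b by (simp add: js_def n_def)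
      moreover have "fv v (js ! b) = vec_index v b" using idx_nth[OF fin] nth_in[OF fin] b by (simp add: fv_def js_def n_def)
      ultimately show "vec_index v b = vec_index (0\<^sub>v n) b" using u0 b by simp
    qed (use v in simp)
    thus False using v by simp
  qed
  have U: "G \<in> Units (ring_mat TYPE(real) n ())"
  proof (rule det_non_zero_imp_unit[OF Gc])
    show "det G \<noteq> 0" by (subst det_0_iff_vec_prod_zero[OF Gc]) (rule dG)
  qed
  obtain B where B: "mat_inverse G = Some B"
  proof (cases "mat_inverse G")
    case None
    have nU: "G \<notin> Units (ring_mat TYPE(real) n ())" by (rule mat_inverse(1)[OF Gc None])
    show ?thesis using U nU by contradiction
  next
    case (Some B')
    show ?thesis by (rule that[OF Some])
  qed
  have GB: "G * B = 1\<^sub>m n" "B \<in> carrier_mat n n" using mat_inverse(2)[OF Gc B] by blast+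
  have ah: "alpha_hat m D J x lam s = fv (B *\<^sub>v rr)"
    unfolding alpha_hat_def Let_def fv_def js_def[symmetric] DJ_def[symmetric] G_def[symmetric] n_def[symmetric] rr_def[symmetric] B
    unfolding option.sel by (rule refl)
  have Brc: "B *\<^sub>v rr \<in> carrier_vec n" using GB(2) rrc by (rule mult_mat_vec_carrier)
  have sol: "G *\<^sub>v (B *\<^sub>v rr) = rr"
    using assoc_mult_mat_vec[OF Gc GB(2) rrc] GB rrc by simp
  have a: "card {i\<in>J. i < j} < n" "js ! card {i\<in>J. i < j} = j" using idx_in[OF fin jJ] by (auto simp: n_def js_def)
  have "(\<Sum>i\<in>J. inner_cols m D D j i * alpha_hat m D J x lam s i) = vec_index (G *\<^sub>v (B *\<^sub>v rr)) (card {i\<in>J. i < j})"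
    using Gv[OF Brc a(1)] a ah by simp
  also have "\<dots> = (\<Sum>r<m. D r j * x r) - lam * sgn (s j)" using sol rr_i[OF a(1)] a by simp
  finally show ?thesis .
qed



lemma cs_ineq: "\<bar>\<Sum>r<m. f r * g r\<bar> \<le> sqrt (\<Sum>r<m. (f r)\<^sup>2) * sqrt (\<Sum>r<m. (g r)\<^sup>2)"
proof -
  have "\<bar>\<Sum>r<m. f r * g r\<bar> \<le> (\<Sum>r<m. \<bar>f r\<bar> * \<bar>g r\<bar>)"
    by (metis (no_types, lifting) abs_mult sum.cong sum_abs)
  also have "\<dots> \<le> L2_set f {..<m} * L2_set g {..<m}" by (rule L2_set_mult_ineq)
  finally show ?thesis by (simp add: L2_set_def)
qed

lemma mv_J:
  assumes "finite J" "J \<subseteq> {..<p}" "\<forall>i<p. i \<notin> J \<longrightarrow> u i = 0"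
  shows "mat_vec p D u r = (\<Sum>i\<in>J. D r i * u i)"
  unfolding mat_vec_def
  by (rule sum.mono_neutral_right) (use assms in auto)

lemma gram_J:
  "(\<Sum>i\<in>J. inner_cols m D D j i * u i) = (\<Sum>r<m. D r j * (\<Sum>i\<in>J. D r i * u i))"
  unfolding inner_cols_def sum_distrib_left sum_distrib_right
  by (subst sum.swap) (simp add: mult_ac)

lemma dom:
  fixes J :: "nat set" and G :: "nat \<Rightarrow> nat \<Rightarrow> real"
  assumes fin: "finite J" and diag: "\<forall>j\<in>J. G j j = 1"
   and off: "\<forall>i\<in>J. \<forall>j\<in>J. i \<noteq> j \<longrightarrow> \<bar>G j i\<bar> \<le> \<mu>" and mu0: "0 \<le> \<mu>"
   and small: "real (card J) * \<mu> < 1"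
   and eq: "\<forall>j\<in>J. \<bar>\<Sum>i\<in>J. G j i * z i\<bar> \<le> R"
   and jJ: "j \<in> J"
  shows "\<bar>z j\<bar> * (1 - real (card J) * \<mu>) \<le> R"
proof -
  define Z where "Z = Max ((\<lambda>i. \<bar>z i\<bar>) ` J)"
  have ne: "J \<noteq> {}" using jJ by auto
  have "Z \<in> (\<lambda>i. \<bar>z i\<bar>) ` J" unfolding Z_def using fin ne by (intro Max_in) auto
  then obtain j0 where j0: "j0 \<in> J" "\<bar>z j0\<bar> = Z" by auto
  have le: "\<bar>z i\<bar> \<le> Z" if "i \<in> J" for i using fin that unfolding Z_def by simp
  have Z0: "0 \<le> Z" using le[OF jJ] by linarith
  have split: "(\<Sum>i\<in>J. G j0 i * z i) = z j0 + (\<Sum>i\<in>J-{j0}. G j0 i * z i)"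
    using sum.remove[OF fin j0(1), of "\<lambda>i. G j0 i * z i"] diag j0 by simp
  have "\<bar>\<Sum>i\<in>J-{j0}. G j0 i * z i\<bar> \<le> (\<Sum>i\<in>J-{j0}. \<bar>G j0 i * z i\<bar>)" by (rule sum_abs)
  also have "\<dots> \<le> (\<Sum>i\<in>J-{j0}. \<mu> * Z)"
  proof (rule sum_mono)
    fix i assume i: "i \<in> J - {j0}"
    have "\<bar>G j0 i\<bar> \<le> \<mu>" using off i j0 by auto
    moreover have "\<bar>z i\<bar> \<le> Z" using le i by auto
    ultimately show "\<bar>G j0 i * z i\<bar> \<le> \<mu> * Z" unfolding abs_mult
      by (intro mult_mono) (use mu0 in auto)
  qed
  also have "\<dots> = real (card J - 1) * \<mu> * Z" using fin j0 by simp
  also have "\<dots> \<le> real (card J) * \<mu> * Z" using mu0 Z0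
    by (intro mult_right_mono) auto
  finally have S: "\<bar>\<Sum>i\<in>J-{j0}. G j0 i * z i\<bar> \<le> real (card J) * \<mu> * Z" .
  have "\<bar>z j0 + (\<Sum>i\<in>J-{j0}. G j0 i * z i)\<bar> \<le> R" using eq j0 split by metis
  hence "Z \<le> R + real (card J) * \<mu> * Z" using S j0 by linarith
  hence Zb: "Z * (1 - real (card J) * \<mu>) \<le> R" by (simp add: algebra_simps)
  have "\<bar>z j\<bar> * (1 - real (card J) * \<mu>) \<le> Z * (1 - real (card J) * \<mu>)"
    using le[OF jJ] small by (intro mult_right_mono) auto
  thus ?thesis using Zb by linarith
qed

lemma lasso_kkt:
  fixes J :: "nat set" and D :: "nat \<Rightarrow> nat \<Rightarrow> real" and h x :: "nat \<Rightarrow> real"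
  assumes fin: "finite J" and Jp: "J \<subseteq> {..<p}" and hv: "vec_in p h"
   and hz: "\<forall>j. j \<notin> J \<longrightarrow> h j = 0" and lam0: "0 < lam"
   and cJ: "\<forall>j\<in>J. (\<Sum>r<m. D r j * (x r - mat_vec p D h r)) = lam * sgn (h j)"
   and cN: "\<forall>j<p. j \<notin> J \<longrightarrow> \<bar>\<Sum>r<m. D r j * (x r - mat_vec p D h r)\<bar> < lam"
   and inj: "\<And>u. (\<forall>j\<in>J. (\<Sum>i\<in>J. inner_cols m D D j i * u i) = 0) \<Longrightarrow> \<forall>j\<in>J. u j = 0"
  shows "unique_lasso_solution m p D x lam h"
proof -
  define c where "c = (\<lambda>j. \<Sum>r<m. D r j * (x r - mat_vec p D h r))"
  have main: "lasso_obj m p D x lam h \<le> lasso_obj m p D x lam b \<and>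
      (lasso_obj m p D x lam b \<le> lasso_obj m p D x lam h \<longrightarrow> b = h)" if bv: "vec_in p b" for b
  proof -
    define u where "u = (\<lambda>j. b j - h j)"
    define y where "y = (\<lambda>r. x r - mat_vec p D h r)"
    define w where "w = (\<lambda>r. mat_vec p D u r)"
    have mvb: "mat_vec p D b r = mat_vec p D h r + w r" for r
      unfolding w_def mat_vec_def u_def by (simp add: sum.distrib[symmetric] algebra_simps)
    have cross: "(\<Sum>r<m. y r * w r) = (\<Sum>j<p. c j * u j)"
    proof -
      have "(\<Sum>r<m. y r * w r) = (\<Sum>r<m. \<Sum>j<p. y r * D r j * u j)"
        unfolding w_def mat_vec_def sum_distrib_left by (simp add: mult_ac)
      also have "\<dots> = (\<Sum>j<p. \<Sum>r<m. y r * D r j * u j)" by (rule sum.swap)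
      also have "\<dots> = (\<Sum>j<p. c j * u j)"
        unfolding c_def y_def sum_distrib_right by (simp add: mult_ac)
      finally show ?thesis .
    qed
    define T where "T = (\<lambda>j. lam * (\<bar>b j\<bar> - \<bar>h j\<bar>) - c j * u j)"
    have diff: "lasso_obj m p D x lam b - lasso_obj m p D x lam h = 1/2 * (\<Sum>r<m. (w r)\<^sup>2) + (\<Sum>j<p. T j)"
    proof -
      have "(\<Sum>r<m. (x r - mat_vec p D b r)\<^sup>2) = (\<Sum>r<m. (y r)\<^sup>2 - 2 * (y r * w r) + (w r)\<^sup>2)"
        by (intro sum.cong refl) (simp add: mvb y_def power2_eq_square algebra_simps)
      also have "\<dots> = (\<Sum>r<m. (y r)\<^sup>2) - 2 * (\<Sum>r<m. y r * w r) + (\<Sum>r<m. (w r)\<^sup>2)"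
        by (simp add: sum.distrib sum_subtractf sum_distrib_left)
      finally have A: "(\<Sum>r<m. (x r - mat_vec p D b r)\<^sup>2) = (\<Sum>r<m. (y r)\<^sup>2) - 2 * (\<Sum>j<p. c j * u j) + (\<Sum>r<m. (w r)\<^sup>2)"
        using cross by simp
      have B: "(\<Sum>j<p. T j) = lam * (\<Sum>j<p. \<bar>b j\<bar>) - lam * (\<Sum>j<p. \<bar>h j\<bar>) - (\<Sum>j<p. c j * u j)"
        unfolding T_def by (simp add: sum_subtractf sum_distrib_left right_diff_distrib)
      show ?thesis unfolding lasso_obj_def A B y_def by (simp add: algebra_simps)
    qed
    have Tnn: "0 \<le> T j" if "j < p" for j
    proof (cases "j \<in> J")
      case True
      hence cj: "c j = lam * sgn (h j)" using cJ c_def by auto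
      have "sgn (h j) * b j \<le> \<bar>b j\<bar>"
        by (auto simp: sgn_if)
      moreover have "sgn (h j) * h j = \<bar>h j\<bar>" by (auto simp: sgn_if)
      ultimately have "0 \<le> lam * (\<bar>b j\<bar> - sgn (h j) * b j)" using lam0 by simp
      thus ?thesis unfolding T_def cj u_def using \<open>sgn (h j) * h j = \<bar>h j\<bar>\<close>
        by (simp add: algebra_simps)
    next
      case False
      hence hj: "h j = 0" using hz by auto
      have "\<bar>c j\<bar> < lam" using cN False that c_def by auto
      have "c j * b j \<le> \<bar>c j\<bar> * \<bar>b j\<bar>" by (metis abs_ge_self abs_mult)
      also have "\<dots> \<le> lam * \<bar>b j\<bar>" using \<open>\<bar>c j\<bar> < lam\<close> by (intro mult_right_mono) auto
      finally have "c j * b j \<le> lam * \<bar>b j\<bar>" .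
      thus ?thesis unfolding T_def u_def hj by simp
    qed
    have wnn: "0 \<le> (\<Sum>r<m. (w r)\<^sup>2)" by (simp add: sum_nonneg)
    have Tsum: "0 \<le> (\<Sum>j<p. T j)" by (intro sum_nonneg) (use Tnn in auto)
    have le1: "lasso_obj m p D x lam h \<le> lasso_obj m p D x lam b" using diff wnn Tsum by linarith
    moreover have "b = h" if le2: "lasso_obj m p D x lam b \<le> lasso_obj m p D x lam h"
    proof -
      have z: "(\<Sum>r<m. (w r)\<^sup>2) = 0" "(\<Sum>j<p. T j) = 0" using diff le2 wnn Tsum by linarith+
      have w0: "w r = 0" if "r < m" for r using sum_nonneg_eq_0_iff[of "{..<m}" "\<lambda>r. (w r)\<^sup>2"] z(1) that by auto
      have T0: "T j = 0" if "j < p" for j using sum_nonneg_eq_0_iff[of "{..<p}" T] z(2) Tnn that by auto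
      have uN: "u j = 0" if "j < p" "j \<notin> J" for j
      proof -
        have hj: "h j = 0" using hz that by auto
        have "\<bar>c j\<bar> < lam" using cN that c_def by auto
        moreover have "c j * b j \<le> \<bar>c j\<bar> * \<bar>b j\<bar>" by (metis abs_ge_self abs_mult)
        moreover have "lam * \<bar>b j\<bar> - c j * b j = 0" using T0[OF that(1)] unfolding T_def u_def hj by simp
        ultimately have "(lam - \<bar>c j\<bar>) * \<bar>b j\<bar> \<le> 0" by (simp add: algebra_simps)
        hence "\<bar>b j\<bar> \<le> 0" using \<open>\<bar>c j\<bar> < lam\<close>
          by (simp add: mult_le_0_iff)
        thus ?thesis unfolding u_def hj by simp
      qed
      have "\<forall>j\<in>J. (\<Sum>i\<in>J. inner_cols m D D j i * u i) = 0"
      proof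
        fix j assume "j \<in> J"
        have "(\<Sum>i\<in>J. inner_cols m D D j i * u i) = (\<Sum>r<m. D r j * w r)"
          unfolding gram_J w_def using mv_J[OF fin Jp, of u] uN by simp
        also have "\<dots> = 0" using w0 by simp
        finally show "(\<Sum>i\<in>J. inner_cols m D D j i * u i) = 0" .
      qed
      hence uJ: "\<forall>j\<in>J. u j = 0" by (rule inj)
      show "b = h"
      proof
        fix j show "b j = h j"
        proof (cases "j < p")
          case True thus ?thesis using uJ uN unfolding u_def by (cases "j \<in> J") auto
        next
          case False thus ?thesis using bv hv unfolding vec_in_def by simp
        qed
      qed
    qed
    ultimately show ?thesis by blast
  qed
  show ?thesis unfolding unique_lasso_solution_def using hv main by blast
qed




lemma sgn_close: "\<bar>y - x\<bar> < \<bar>x\<bar> \<Longrightarrow> sgn y = sgn (x::real)"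
  by (auto simp: sgn_if abs_if split: if_splits)

lemma ah_out: "j \<notin> J \<Longrightarrow> alpha_hat m D J x lam s j = 0"
  unfolding alpha_hat_def Let_def by simp

lemma inner_sym: "inner_cols m D D i j = inner_cols m D D j i"
  unfolding inner_cols_def by (simp add: mult.commute)

lemma cs_unit:
  assumes "inner_cols m D D j j = 1" "(\<Sum>r<m. (e r)\<^sup>2) \<le> E\<^sup>2" "0 \<le> E"
  shows "\<bar>\<Sum>r<m. D r j * e r\<bar> \<le> E"
proof -
  have "\<bar>\<Sum>r<m. D r j * e r\<bar> \<le> sqrt (\<Sum>r<m. (D r j)\<^sup>2) * sqrt (\<Sum>r<m. (e r)\<^sup>2)" by (rule cs_ineq)
  also have "(\<Sum>r<m. (D r j)\<^sup>2) = 1" using assms(1) unfolding inner_cols_def by (simp add: power2_eq_square)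
  also have "sqrt (\<Sum>r<m. (e r)\<^sup>2) \<le> sqrt (E\<^sup>2)" using assms(2) by (rule real_sqrt_le_mono)
  hence "sqrt (\<Sum>r<m. (e r)\<^sup>2) \<le> E" using assms(3) by simp
  finally show ?thesis by simp
qed

lemma det_main:
  fixes J :: "nat set" and D :: "nat \<Rightarrow> nat \<Rightarrow> real" and x a0 :: "nat \<Rightarrow> real"
  assumes fin: "finite J" and Jp: "J \<subseteq> {..<p}"
  and unit: "\<forall>j<p. inner_cols m D D j j = 1"
  and coh: "\<forall>i<p. \<forall>j\<in>J. i \<noteq> j \<longrightarrow> \<bar>inner_cols m D D i j\<bar> \<le> \<mu>"
  and mu0: "0 \<le> \<mu>" and nu: "real (card J) * \<mu> < 1/2"
  and a0z: "\<forall>j. j \<notin> J \<longrightarrow> a0 j = 0"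
  and a0lo: "\<forall>j\<in>J. alo \<le> \<bar>a0 j\<bar>"
  and eE: "(\<Sum>r<m. (x r - mat_vec p D a0 r)\<^sup>2) \<le> E\<^sup>2" and E0: "0 \<le> E"
  and Elam: "E * (1 - real (card J) * \<mu>) < lam * (1 - 2 * (real (card J) * \<mu>))"
  and lam0: "0 < lam" and lamlo: "lam \<le> 4/9 * alo"
  shows "unique_lasso_solution m p D x lam (alpha_hat m D J x lam a0) \<and>
         (\<forall>j<p. sgn (alpha_hat m D J x lam a0 j) = sgn (a0 j))"
proof -
  define q where "q = 1 - real (card J) * \<mu>"
  have q0: "1/2 < q" "q \<le> 1" using nu mu0 unfolding q_def by auto
  have Jp': "j < p" if "j \<in> J" for j using Jp that by auto
  have diag: "\<forall>j\<in>J. inner_cols m D D j j = 1" using unit Jp' by auto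
  have off: "\<forall>i\<in>J. \<forall>j\<in>J. i \<noteq> j \<longrightarrow> \<bar>inner_cols m D D j i\<bar> \<le> \<mu>"
    using coh Jp' by auto
  have small: "real (card J) * \<mu> < 1" using nu by linarith
  have domR: "\<bar>z j\<bar> * q \<le> R" if "\<forall>j\<in>J. \<bar>\<Sum>i\<in>J. inner_cols m D D j i * z i\<bar> \<le> R" "j \<in> J" for z R j
    unfolding q_def by (rule dom[OF fin diag off mu0 small that])
  have inj: "\<forall>j\<in>J. u j = 0" if "\<forall>j\<in>J. (\<Sum>i\<in>J. inner_cols m D D j i * u i) = 0" for u
  proof
    fix j assume j: "j \<in> J"
    have "\<bar>u j\<bar> * q \<le> 0" by (rule domR) (use that j in auto)
    thus "u j = 0" using q0 by (simp add: mult_le_0_iff)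
  qed
  define e where "e = (\<lambda>r. x r - mat_vec p D a0 r)"
  define ah where "ah = alpha_hat m D J x lam a0"
  define d1 where "d1 = alpha_hat m D J e 0 a0"
  define d2 where "d2 = alpha_hat m D J (\<lambda>r. 0) lam a0"
  have ahz: "ah j = 0" "d1 j = 0" "d2 j = 0" if "j \<notin> J" for j
    unfolding ah_def d1_def d2_def using that by (simp_all add: ah_out)
  have mvJ: "mat_vec p D f r = (\<Sum>i\<in>J. D r i * f i)" if "\<forall>j. j \<notin> J \<longrightarrow> f j = 0" for f r
    by (rule mv_J[OF fin Jp]) (use that in auto)
  have eq1: "(\<Sum>i\<in>J. inner_cols m D D j i * ah i) = (\<Sum>r<m. D r j * x r) - lam * sgn (a0 j)" if "j \<in> J" for j
    unfolding ah_def by (rule alpha_hat_eq[OF fin _ that]) (use inj in blast)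
  have eq2: "(\<Sum>i\<in>J. inner_cols m D D j i * d1 i) = (\<Sum>r<m. D r j * e r)" if "j \<in> J" for j
    unfolding d1_def using alpha_hat_eq[where x=e and lam=0 and s=a0, OF fin _ that] inj by simp
  have eq3: "(\<Sum>i\<in>J. inner_cols m D D j i * d2 i) = - lam * sgn (a0 j)" if "j \<in> J" for j
    unfolding d2_def using alpha_hat_eq[where x="\<lambda>r. 0" and lam=lam and s=a0, OF fin _ that] inj by simp
  have eq4: "(\<Sum>i\<in>J. inner_cols m D D j i * f i) = (\<Sum>r<m. D r j * mat_vec p D f r)"
    if "\<forall>j. j \<notin> J \<longrightarrow> f j = 0" for j f
    unfolding gram_J using mvJ[OF that] by simp
  have xsplit: "(\<Sum>r<m. D r j * x r) = (\<Sum>r<m. D r j * e r) + (\<Sum>r<m. D r j * mat_vec p D a0 r)" for j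
    unfolding e_def by (simp add: sum.distrib[symmetric] algebra_simps)
  have lin: "(\<Sum>i\<in>J. inner_cols m D D j i * (f i - g i)) = (\<Sum>i\<in>J. inner_cols m D D j i * f i) - (\<Sum>i\<in>J. inner_cols m D D j i * g i)" for j f g
    by (simp add: right_diff_distrib sum_subtractf)
  have dec: "ah j = a0 j + d1 j + d2 j" for j
  proof (cases "j \<in> J")
    case False thus ?thesis using ahz a0z by simp
  next
    case True
    have "\<forall>j\<in>J. (\<Sum>i\<in>J. inner_cols m D D j i * (ah i - a0 i - d1 i - d2 i)) = 0"
    proof
      fix j assume j: "j \<in> J"
      have "(\<Sum>i\<in>J. inner_cols m D D j i * (ah i - a0 i - d1 i - d2 i)) =
        (\<Sum>i\<in>J. inner_cols m D D j i * ah i) - (\<Sum>i\<in>J. inner_cols m D D j i * a0 i)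
         - (\<Sum>i\<in>J. inner_cols m D D j i * d1 i) - (\<Sum>i\<in>J. inner_cols m D D j i * d2 i)"
        by (simp add: right_diff_distrib sum_subtractf)
      also have "\<dots> = 0" using eq1[OF j] eq2[OF j] eq3[OF j] eq4[OF a0z, of j] xsplit[of j] by simp
      finally show "(\<Sum>i\<in>J. inner_cols m D D j i * (ah i - a0 i - d1 i - d2 i)) = 0" .
    qed
    hence "\<forall>j\<in>J. ah j - a0 j - d1 j - d2 j = 0" by (rule inj)
    hence "ah j - a0 j - d1 j - d2 j = 0" using True by blast
    thus ?thesis by simp
  qed
  have ee: "(\<Sum>r<m. (e r)\<^sup>2) \<le> E\<^sup>2" using eE unfolding e_def .
  have csj: "\<bar>\<Sum>r<m. D r j * e r\<bar> \<le> E" if "j < p" for j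
    by (rule cs_unit[OF _ ee E0]) (use unit that in auto)
  have close: "\<bar>ah j - a0 j\<bar> < alo" if j: "j \<in> J" for j
  proof -
    have P: "\<bar>ah j - a0 j\<bar> * q \<le> E + lam"
    proof (rule domR[of "\<lambda>i. ah i - a0 i"])
      show "\<forall>j\<in>J. \<bar>\<Sum>i\<in>J. inner_cols m D D j i * (ah i - a0 i)\<bar> \<le> E + lam"
      proof
        fix j assume j: "j \<in> J"
        have "(\<Sum>i\<in>J. inner_cols m D D j i * (ah i - a0 i)) = (\<Sum>r<m. D r j * e r) - lam * sgn (a0 j)"
          unfolding lin using eq1[OF j] eq4[OF a0z, of j] xsplit[of j] by simp
        moreover have "\<bar>lam * sgn (a0 j)\<bar> \<le> lam" using lam0 by (simp add: abs_mult abs_sgn_eq)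
        ultimately show "\<bar>\<Sum>i\<in>J. inner_cols m D D j i * (ah i - a0 i)\<bar> \<le> E + lam"
          using csj[OF Jp'[OF j]] by linarith
      qed
    qed (rule j)
    have A: "\<bar>ah j - a0 j\<bar> * q * q \<le> E * q + lam * q"
      using mult_right_mono[OF P, of q] q0 by (simp add: distrib_right)
    have B: "E * q < lam * (2 * q - 1)" using Elam unfolding q_def by (simp add: algebra_simps)
    have C: "lam * (3 * q - 1) \<le> alo * (q * q)"
    proof -
      have "0 \<le> (3 * q - 2)\<^sup>2" by simp
      hence "4/9 * (3 * q - 1) \<le> q * q" by (simp add: power2_eq_square algebra_simps)
      moreover have "0 \<le> 3 * q - 1" using q0 by simp
      ultimately have "lam * (3 * q - 1) \<le> 4/9 * alo * (3 * q - 1)" using lamlo by (intro mult_right_mono) auto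
      also have "\<dots> \<le> alo * (q * q)"
      proof -
        have alo0: "0 \<le> alo" using lamlo lam0 by simp
        show ?thesis using mult_left_mono[OF \<open>4/9 * (3 * q - 1) \<le> q * q\<close> alo0] by (simp add: mult_ac)
      qed
      finally show ?thesis .
    qed
    have "\<bar>ah j - a0 j\<bar> * (q * q) < alo * (q * q)" using A B C by (simp add: algebra_simps)
    moreover have "0 < q * q" using q0 by simp
    ultimately show ?thesis using mult_less_cancel_right_pos by blast
  qed
  have sgns: "sgn (ah j) = sgn (a0 j)" for j
  proof (cases "j \<in> J")
    case True thus ?thesis using close[OF True] a0lo by (intro sgn_close) force
  next
    case False thus ?thesis using ahz a0z by simp
  qed
  define g where "g = (\<lambda>r. e r - (\<Sum>i\<in>J. D r i * d1 i))"
  have gorth: "(\<Sum>r<m. D r j * g r) = 0" if "j \<in> J" for j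
  proof -
    have "(\<Sum>r<m. D r j * g r) = (\<Sum>r<m. D r j * e r) - (\<Sum>r<m. D r j * (\<Sum>i\<in>J. D r i * d1 i))"
      unfolding g_def by (simp add: right_diff_distrib sum_subtractf)
    also have "\<dots> = 0" using eq2[OF that] unfolding gram_J by simp
    finally show ?thesis .
  qed
  have gnorm: "(\<Sum>r<m. (g r)\<^sup>2) \<le> E\<^sup>2"
  proof -
    define s where "s = sqrt (\<Sum>r<m. (g r)\<^sup>2)"
    have s0: "0 \<le> s" unfolding s_def by (simp add: sum_nonneg)
    have ss: "s * s = (\<Sum>r<m. (g r)\<^sup>2)" unfolding s_def by (simp add: sum_nonneg)
    have "(\<Sum>r<m. (g r)\<^sup>2) = (\<Sum>r<m. g r * e r) - (\<Sum>r<m. g r * (\<Sum>i\<in>J. D r i * d1 i))"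
      unfolding g_def by (simp add: power2_eq_square right_diff_distrib sum_subtractf)
    also have "(\<Sum>r<m. g r * (\<Sum>i\<in>J. D r i * d1 i)) = (\<Sum>i\<in>J. d1 i * (\<Sum>r<m. D r i * g r))"
      by (simp add: sum_distrib_left sum_distrib_right mult_ac sum.swap[of _ J])
    also have "\<dots> = 0" using gorth by simp
    finally have "(\<Sum>r<m. (g r)\<^sup>2) = (\<Sum>r<m. g r * e r)" by simp
    also have "\<dots> \<le> \<bar>\<Sum>r<m. g r * e r\<bar>" by simp
    also have "\<dots> \<le> s * sqrt (\<Sum>r<m. (e r)\<^sup>2)" unfolding s_def by (rule cs_ineq)
    also have "\<dots> \<le> s * E"
    proof (rule mult_left_mono[OF _ s0])
      have "sqrt (\<Sum>r<m. (e r)\<^sup>2) \<le> sqrt (E\<^sup>2)" using ee by (rule real_sqrt_le_mono)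
      thus "sqrt (\<Sum>r<m. (e r)\<^sup>2) \<le> E" using E0 by simp
    qed
    finally have "s * s \<le> s * E" using ss by simp
    hence "s \<le> E" using s0 E0 by (cases "s = 0") (auto simp: mult_le_cancel_left)
    hence "s * s \<le> E * E" using s0 by (intro mult_mono) auto
    thus ?thesis using ss by (simp add: power2_eq_square)
  qed
  have d2b: "\<bar>d2 i\<bar> * q \<le> lam" if "i \<in> J" for i
  proof (rule domR[OF _ that])
    show "\<forall>j\<in>J. \<bar>\<Sum>i\<in>J. inner_cols m D D j i * d2 i\<bar> \<le> lam"
      using eq3 lam0 by (simp add: abs_mult abs_sgn_eq)
  qed
  have xres: "x r - mat_vec p D ah r = g r - (\<Sum>i\<in>J. D r i * d2 i)" for r
  proof -
    have "mat_vec p D ah r = (\<Sum>i\<in>J. D r i * a0 i) + (\<Sum>i\<in>J. D r i * d1 i) + (\<Sum>i\<in>J. D r i * d2 i)"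
      using mvJ[of ah r] ahz dec by (simp add: sum.distrib[symmetric] algebra_simps)
    moreover have "mat_vec p D a0 r = (\<Sum>i\<in>J. D r i * a0 i)" using mvJ[OF a0z] .
    ultimately show ?thesis unfolding g_def e_def by simp
  qed
  have cN: "\<forall>j<p. j \<notin> J \<longrightarrow> \<bar>\<Sum>r<m. D r j * (x r - mat_vec p D ah r)\<bar> < lam"
  proof (intro allI impI)
    fix j assume j: "j < p" "j \<notin> J"
    have h1: "(\<Sum>r<m. D r j * (x r - mat_vec p D ah r)) = (\<Sum>r<m. D r j * g r) - (\<Sum>i\<in>J. inner_cols m D D j i * d2 i)"
      unfolding xres gram_J by (simp add: right_diff_distrib sum_subtractf)
    have h2: "\<bar>\<Sum>r<m. D r j * g r\<bar> \<le> E" by (rule cs_unit[OF _ gnorm E0]) (use unit j in auto)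
    have h3: "\<bar>\<Sum>i\<in>J. inner_cols m D D j i * d2 i\<bar> * q \<le> real (card J) * \<mu> * lam"
    proof -
      have "\<bar>\<Sum>i\<in>J. inner_cols m D D j i * d2 i\<bar> * q \<le> (\<Sum>i\<in>J. \<bar>inner_cols m D D j i * d2 i\<bar>) * q"
        using q0 by (intro mult_right_mono sum_abs) auto
      also have "\<dots> = (\<Sum>i\<in>J. \<bar>inner_cols m D D j i\<bar> * (\<bar>d2 i\<bar> * q))"
        by (simp add: sum_distrib_right sum_distrib_left abs_mult mult_ac)
      also have "\<dots> \<le> (\<Sum>i\<in>J. \<mu> * lam)"
      proof (rule sum_mono)
        fix i assume i: "i \<in> J"
        have "\<bar>inner_cols m D D j i\<bar> \<le> \<mu>" using coh j i by auto
        thus "\<bar>inner_cols m D D j i\<bar> * (\<bar>d2 i\<bar> * q) \<le> \<mu> * lam"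
          using d2b[OF i] q0 mu0 by (intro mult_mono) auto
      qed
      also have "\<dots> = real (card J) * \<mu> * lam" by simp
      finally show ?thesis .
    qed
    have gen: "\<bar>C\<bar> * q \<le> E * q + real (card J) * \<mu> * lam"
      if h: "C = A - B" "\<bar>A\<bar> \<le> E" "\<bar>B\<bar> * q \<le> real (card J) * \<mu> * lam" for A B C :: real
    proof -
      have "\<bar>C\<bar> * q \<le> (\<bar>A\<bar> + \<bar>B\<bar>) * q" using h(1) q0 by (intro mult_right_mono) auto
      also have "\<dots> = \<bar>A\<bar> * q + \<bar>B\<bar> * q" by (simp add: distrib_right)
      also have "\<bar>A\<bar> * q \<le> E * q" using h(2) q0 by (intro mult_right_mono) auto
      finally show "\<bar>C\<bar> * q \<le> E * q + real (card J) * \<mu> * lam" using h(3) by linarith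
    qed
    have "\<bar>\<Sum>r<m. D r j * (x r - mat_vec p D ah r)\<bar> * q \<le> E * q + real (card J) * \<mu> * lam"
      by (rule gen[OF h1 h2 h3])
    also have "\<dots> < lam * q" using Elam unfolding q_def by (simp add: algebra_simps)
    finally show "\<bar>\<Sum>r<m. D r j * (x r - mat_vec p D ah r)\<bar> < lam" using q0 by simp
  qed
  have cJ: "\<forall>j\<in>J. (\<Sum>r<m. D r j * (x r - mat_vec p D ah r)) = lam * sgn (ah j)"
  proof
    fix j assume j: "j \<in> J"
    have "(\<Sum>r<m. D r j * (x r - mat_vec p D ah r)) = (\<Sum>r<m. D r j * x r) - (\<Sum>i\<in>J. inner_cols m D D j i * ah i)"
      using eq4[of ah j] ahz by (simp add: right_diff_distrib sum_subtractf)
    also have "\<dots> = lam * sgn (a0 j)" using eq1[OF j] by simp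
    finally show "(\<Sum>r<m. D r j * (x r - mat_vec p D ah r)) = lam * sgn (ah j)" using sgns by simp
  qed
  have hv: "vec_in p ah" unfolding vec_in_def using ahz Jp' by (meson not_le)
  have "unique_lasso_solution m p D x lam ah"
    by (rule lasso_kkt[OF fin Jp hv _ lam0 cJ cN]) (use ahz inj in auto)
  thus ?thesis using sgns unfolding ah_def by simp
qed




lemma cos_bound: "2 - 2 * cos (x::real) \<le> x\<^sup>2"
proof -
  have c: "cos x = 1 - 2 * (sin (x/2))\<^sup>2" using cos_double_sin[of "x/2"] by simp
  have "\<bar>sin (x/2)\<bar> \<le> \<bar>x/2\<bar>" by (rule abs_sin_x_le_abs_x)
  hence "\<bar>sin (x/2)\<bar>\<^sup>2 \<le> \<bar>x/2\<bar>\<^sup>2" by (intro power_mono) auto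
  hence "(sin (x/2))\<^sup>2 \<le> (x/2)\<^sup>2" by (simp only: power2_abs)
  thus ?thesis using c by (simp add: power_divide)
qed

lemma cs1:
  fixes f g :: "nat \<Rightarrow> real"
  assumes "(\<Sum>r<m. (f r)\<^sup>2) = 1" "(\<Sum>r<m. (g r)\<^sup>2) = 1"
  shows "\<bar>\<Sum>r<m. f r * g r\<bar> \<le> 1"
  using cs_ineq[of f g m] assms by simp

lemma expand4:
  fixes A B C E :: "nat \<Rightarrow> real"
  shows "(\<Sum>r<m. (A r * a + B r * b) * (C r * c + E r * d)) =
    a * c * (\<Sum>r<m. A r * C r) + a * d * (\<Sum>r<m. A r * E r) + b * c * (\<Sum>r<m. B r * C r) + b * d * (\<Sum>r<m. B r * E r)"
proof -
  have "\<And>r. (A r * a + B r * b) * (C r * c + E r * d) = a * c * (A r * C r) + a * d * (A r * E r) + b * c * (B r * C r) + b * d * (B r * E r)"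
    by (simp add: algebra_simps)
  hence "(\<Sum>r<m. (A r * a + B r * b) * (C r * c + E r * d)) = (\<Sum>r<m. a * c * (A r * C r) + a * d * (A r * E r) + b * c * (B r * C r) + b * d * (B r * E r))"
    by simp
  also have "\<dots> = a * c * (\<Sum>r<m. A r * C r) + a * d * (\<Sum>r<m. A r * E r) + b * c * (\<Sum>r<m. B r * C r) + b * d * (\<Sum>r<m. B r * E r)"
    by (simp add: sum.distrib sum_distrib_left)
  finally show ?thesis .
qed

lemma norm1: "inner_cols m D D j j = 1 \<Longrightarrow> (\<Sum>r<m. (D r j)\<^sup>2) = 1"
  unfolding inner_cols_def by (simp add: power2_eq_square)

lemma v_le1:
  assumes "v \<in> unit_sphere_p p" "j < p"
  shows "\<bar>v j\<bar> \<le> 1"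
proof -
  have "(v j)\<^sup>2 \<le> (\<Sum>j<p. (v j)\<^sup>2)" using assms(2) by (intro member_le_sum) auto
  hence "(v j)\<^sup>2 \<le> 1" using assms(1) unfolding unit_sphere_p_def by simp
  thus ?thesis by (simp add: abs_square_le_1)
qed

lemma coh_ge:
  assumes "i < p" "j < p" "i \<noteq> j"
  shows "\<bar>inner_cols m D0 D0 i j\<bar> \<le> coherence m p D0"
proof -
  have p: "\<not> p \<le> 1" using assms by auto
  have fin: "finite {\<bar>inner_cols m D0 D0 i j\<bar> | i j. i < p \<and> j < p \<and> i \<noteq> j}"
  proof (rule finite_subset)
    show "{\<bar>inner_cols m D0 D0 i j\<bar> | i j. i < p \<and> j < p \<and> i \<noteq> j} \<subseteq> (\<lambda>(i,j). \<bar>inner_cols m D0 D0 i j\<bar>) ` ({..<p} \<times> {..<p})"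
      by auto
  qed auto
  show ?thesis unfolding coherence_def using p fin assms by (auto intro!: Max_ge)
qed

lemma coherence_nonneg: "0 \<le> coherence m p D0"
proof (cases "p \<le> 1")
  case True thus ?thesis unfolding coherence_def by simp
next
  case False
  hence "\<bar>inner_cols m D0 D0 0 1\<bar> \<le> coherence m p D0" by (intro coh_ge) auto
  thus ?thesis by linarith
qed

lemma dpath_unit:
  assumes D0: "D0 \<in> dict_set m p" and W: "W \<in> W_set m p D0" and j: "j < p"
  shows "inner_cols m (D_path D0 W v t') (D_path D0 W v t') j j = 1"
proof -
  have a: "(\<Sum>r<m. D0 r j * D0 r j) = 1" using D0 j unfolding dict_set_def inner_cols_def by auto
  have b: "(\<Sum>r<m. W r j * W r j) = 1" "(\<Sum>r<m. W r j * D0 r j) = 0"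
    using W j unfolding W_set_def inner_cols_def by auto
  have b': "(\<Sum>r<m. D0 r j * W r j) = 0" using b(2) by (simp add: mult.commute)
  have "inner_cols m (D_path D0 W v t') (D_path D0 W v t') j j = (cos (v j * t'))\<^sup>2 + (sin (v j * t'))\<^sup>2"
    unfolding inner_cols_def D_path_def expand4 a b b' by (simp add: power2_eq_square)
  thus ?thesis by simp
qed

lemma dpath_coh:
  assumes D0: "D0 \<in> dict_set m p" and W: "W \<in> W_set m p D0" and v: "v \<in> unit_sphere_p p"
   and t: "0 \<le> t'" and ij: "i < p" "j < p" "i \<noteq> j"
  shows "\<bar>inner_cols m (D_path D0 W v t') (D_path D0 W v t') i j\<bar> \<le> coherence m p D0 + 3 * t'"
proof -
  have n: "(\<Sum>r<m. (D0 r i)\<^sup>2) = 1" "(\<Sum>r<m. (D0 r j)\<^sup>2) = 1" "(\<Sum>r<m. (W r i)\<^sup>2) = 1" "(\<Sum>r<m. (W r j)\<^sup>2) = 1"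
    using D0 W ij unfolding dict_set_def W_set_def by (auto intro: norm1)
  define ci where "ci = cos (v i * t')"
  define cj where "cj = cos (v j * t')"
  define si where "si = sin (v i * t')"
  define sj where "sj = sin (v j * t')"
  have sb: "\<bar>si\<bar> \<le> t'" "\<bar>sj\<bar> \<le> t'"
  proof -
    have "\<bar>si\<bar> \<le> \<bar>v i * t'\<bar>" unfolding si_def by (rule abs_sin_x_le_abs_x)
    also have "\<dots> \<le> t'" using v_le1[OF v ij(1)] t by (simp add: abs_mult mult_left_le_one_le)
    finally show "\<bar>si\<bar> \<le> t'" .
    have "\<bar>sj\<bar> \<le> \<bar>v j * t'\<bar>" unfolding sj_def by (rule abs_sin_x_le_abs_x)
    also have "\<dots> \<le> t'" using v_le1[OF v ij(2)] t by (simp add: abs_mult mult_left_le_one_le)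
    finally show "\<bar>sj\<bar> \<le> t'" .
  qed
  have cb: "\<bar>ci\<bar> \<le> 1" "\<bar>cj\<bar> \<le> 1" "\<bar>si\<bar> \<le> 1" unfolding ci_def cj_def si_def by simp_all
  define X where "X = (\<Sum>r<m. D0 r i * D0 r j)"
  define Y where "Y = (\<Sum>r<m. D0 r i * W r j)"
  define Z where "Z = (\<Sum>r<m. W r i * D0 r j)"
  define U where "U = (\<Sum>r<m. W r i * W r j)"
  have XYZ: "\<bar>X\<bar> \<le> coherence m p D0" "\<bar>Y\<bar> \<le> 1" "\<bar>Z\<bar> \<le> 1" "\<bar>U\<bar> \<le> 1"
    using coh_ge[OF ij, of m D0] n unfolding X_def Y_def Z_def U_def inner_cols_def by (auto intro: cs1)
  have eq: "inner_cols m (D_path D0 W v t') (D_path D0 W v t') i j = ci * cj * X + ci * sj * Y + si * cj * Z + si * sj * U"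
    unfolding inner_cols_def D_path_def expand4 ci_def cj_def si_def sj_def X_def Y_def Z_def U_def by simp
  have "\<bar>ci * cj * X\<bar> \<le> coherence m p D0"
  proof -
    have "\<bar>ci * cj\<bar> \<le> 1" using cb by (simp add: abs_mult mult_le_one)
    hence "\<bar>ci * cj\<bar> * \<bar>X\<bar> \<le> 1 * \<bar>X\<bar>" by (intro mult_right_mono) auto
    thus ?thesis using XYZ(1) by (simp add: abs_mult)
  qed
  moreover have "\<bar>ci * sj * Y\<bar> \<le> t'"
  proof -
    have "\<bar>ci * Y\<bar> \<le> 1" using cb XYZ by (simp add: abs_mult mult_le_one)
    hence "\<bar>sj\<bar> * \<bar>ci * Y\<bar> \<le> \<bar>sj\<bar>" by (simp add: mult_left_le)
    thus ?thesis using sb by (simp add: abs_mult mult_ac)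
  qed
  moreover have "\<bar>si * cj * Z\<bar> \<le> t'"
  proof -
    have "\<bar>cj * Z\<bar> \<le> 1" using cb XYZ by (simp add: abs_mult mult_le_one)
    hence "\<bar>si\<bar> * \<bar>cj * Z\<bar> \<le> \<bar>si\<bar>" by (simp add: mult_left_le)
    thus ?thesis using sb by (simp add: abs_mult mult_ac)
  qed
  moreover have "\<bar>si * sj * U\<bar> \<le> t'"
  proof -
    have "\<bar>si * U\<bar> \<le> 1" using cb XYZ by (simp add: abs_mult mult_le_one)
    hence "\<bar>sj\<bar> * \<bar>si * U\<bar> \<le> \<bar>sj\<bar>" by (simp add: mult_left_le)
    thus ?thesis using sb by (simp add: abs_mult mult_ac)
  qed
  moreover have "\<bar>ci * cj * X + ci * sj * Y + si * cj * Z + si * sj * U\<bar> \<le>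
     \<bar>ci * cj * X\<bar> + \<bar>ci * sj * Y\<bar> + \<bar>si * cj * Z\<bar> + \<bar>si * sj * U\<bar>"
    using abs_triangle_ineq[of "ci * cj * X + ci * sj * Y + si * cj * Z" "si * sj * U"]
      abs_triangle_ineq[of "ci * cj * X + ci * sj * Y" "si * cj * Z"]
      abs_triangle_ineq[of "ci * cj * X" "ci * sj * Y"] by linarith
  ultimately show ?thesis unfolding eq by linarith
qed




lemma L2_sum_triangle:
  fixes F :: "nat \<Rightarrow> nat \<Rightarrow> real"
  assumes "finite J"
  shows "L2_set (\<lambda>r. \<Sum>j\<in>J. F r j) A \<le> (\<Sum>j\<in>J. L2_set (\<lambda>r. F r j) A)"
  using assms
proof (induction J rule: finite_induct)
  case empty thus ?case by (simp add: L2_set_def)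
next
  case (insert j J)
  have "L2_set (\<lambda>r. \<Sum>i\<in>insert j J. F r i) A = L2_set (\<lambda>r. F r j + (\<Sum>i\<in>J. F r i)) A"
    using insert by simp
  also have "\<dots> \<le> L2_set (\<lambda>r. F r j) A + L2_set (\<lambda>r. \<Sum>i\<in>J. F r i) A" by (rule L2_set_triangle_ineq)
  also have "\<dots> \<le> L2_set (\<lambda>r. F r j) A + (\<Sum>i\<in>J. L2_set (\<lambda>r. F r i) A)" using insert by simp
  also have "\<dots> = (\<Sum>i\<in>insert j J. L2_set (\<lambda>r. F r i) A)" using insert by simp
  finally show ?case .
qed

lemma L2_scale: "L2_set (\<lambda>r. g r * (c::real)) A = \<bar>c\<bar> * L2_set g A"
  unfolding L2_set_def by (simp add: power_mult_distrib sum_distrib_right[symmetric] real_sqrt_mult)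

lemma dpath_col_diff:
  assumes D0: "D0 \<in> dict_set m p" and W: "W \<in> W_set m p D0" and j: "j < p"
  shows "L2_set (\<lambda>r. D0 r j - D_path D0 W v t' r j) {..<m} \<le> \<bar>v j * t'\<bar>"
proof -
  have a: "(\<Sum>r<m. D0 r j * D0 r j) = 1" using D0 j unfolding dict_set_def inner_cols_def by auto
  have b: "(\<Sum>r<m. W r j * W r j) = 1" "(\<Sum>r<m. W r j * D0 r j) = 0"
    using W j unfolding W_set_def inner_cols_def by auto
  have b': "(\<Sum>r<m. D0 r j * W r j) = 0" using b(2) by (simp add: mult.commute)
  define c where "c = cos (v j * t')"
  define s where "s = sin (v j * t')"
  have "(\<Sum>r<m. (D0 r j - D_path D0 W v t' r j)\<^sup>2) = (\<Sum>r<m. (D0 r j * (1 - c) + W r j * (- s)) * (D0 r j * (1 - c) + W r j * (- s)))"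
    unfolding D_path_def c_def s_def power2_eq_square by (intro sum.cong refl) (simp add: algebra_simps)
  also have "\<dots> = (1 - c)\<^sup>2 + s\<^sup>2" unfolding expand4 a b b' by (simp add: power2_eq_square)
  also have "\<dots> = 2 - 2 * c" using sin_cos_squared_add[of "v j * t'"] unfolding c_def s_def
    by (simp add: power2_eq_square algebra_simps)
  also have "\<dots> \<le> (v j * t')\<^sup>2" unfolding c_def by (rule cos_bound)
  finally have "(\<Sum>r<m. (D0 r j - D_path D0 W v t' r j)\<^sup>2) \<le> (v j * t')\<^sup>2" .
  hence "sqrt (\<Sum>r<m. (D0 r j - D_path D0 W v t' r j)\<^sup>2) \<le> sqrt ((v j * t')\<^sup>2)" by (rule real_sqrt_le_mono)
  thus ?thesis unfolding L2_set_def by simp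
qed

lemma dpath_err:
  fixes J :: "nat set" and a0 :: "nat \<Rightarrow> real"
  assumes D0: "D0 \<in> dict_set m p" and W: "W \<in> W_set m p D0" and v: "v \<in> unit_sphere_p p"
   and t: "0 \<le> t'" and fin: "finite J" and Jp: "J \<subseteq> {..<p}"
   and a0z: "\<forall>j. j \<notin> J \<longrightarrow> a0 j = 0" and a0hi: "\<forall>j\<in>J. \<bar>a0 j\<bar> \<le> ahi" and ahi: "0 \<le> ahi"
  shows "(\<Sum>r<m. (mat_vec p D0 a0 r - mat_vec p (D_path D0 W v t') a0 r)\<^sup>2) \<le> (sqrt (real (card J)) * ahi * t')\<^sup>2"
proof -
  define D where "D = D_path D0 W v t'"
  have Jp': "j < p" if "j \<in> J" for j using Jp that by auto
  have e: "mat_vec p D0 a0 r - mat_vec p D a0 r = (\<Sum>j\<in>J. (D0 r j - D r j) * a0 j)" for r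
    using mv_J[OF fin Jp, of a0 D0 r] mv_J[OF fin Jp, of a0 D r] a0z
    by (simp add: sum_subtractf left_diff_distrib)
  have "L2_set (\<lambda>r. mat_vec p D0 a0 r - mat_vec p D a0 r) {..<m} = L2_set (\<lambda>r. \<Sum>j\<in>J. (D0 r j - D r j) * a0 j) {..<m}"
    unfolding e ..
  also have "\<dots> \<le> (\<Sum>j\<in>J. L2_set (\<lambda>r. (D0 r j - D r j) * a0 j) {..<m})" by (rule L2_sum_triangle[OF fin])
  also have "\<dots> = (\<Sum>j\<in>J. \<bar>a0 j\<bar> * L2_set (\<lambda>r. D0 r j - D r j) {..<m})" by (simp add: L2_scale)
  also have "\<dots> \<le> (\<Sum>j\<in>J. ahi * (\<bar>v j\<bar> * t'))"
  proof (rule sum_mono)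
    fix j assume j: "j \<in> J"
    have "L2_set (\<lambda>r. D0 r j - D r j) {..<m} \<le> \<bar>v j\<bar> * t'"
      using dpath_col_diff[OF D0 W Jp'[OF j], of v t'] t unfolding D_def by (simp add: abs_mult)
    thus "\<bar>a0 j\<bar> * L2_set (\<lambda>r. D0 r j - D r j) {..<m} \<le> ahi * (\<bar>v j\<bar> * t')"
      using a0hi j by (intro mult_mono) (auto simp: L2_set_def sum_nonneg)
  qed
  also have "\<dots> = ahi * t' * (\<Sum>j\<in>J. \<bar>v j\<bar> * \<bar>1\<bar>)" by (simp add: sum_distrib_left mult_ac)
  also have "\<dots> \<le> ahi * t' * (L2_set v J * L2_set (\<lambda>_. 1) J)"
    using ahi t by (intro mult_left_mono L2_set_mult_ineq) auto
  also have "\<dots> \<le> ahi * t' * (1 * sqrt (real (card J)))"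
  proof (rule mult_left_mono)
    have "(\<Sum>j\<in>J. (v j)\<^sup>2) \<le> (\<Sum>j<p. (v j)\<^sup>2)" using Jp by (intro sum_mono2) auto
    hence "L2_set v J \<le> 1" using v unfolding unit_sphere_p_def L2_set_def by simp
    moreover have "L2_set (\<lambda>_. 1::real) J = sqrt (real (card J))" unfolding L2_set_def by simp
    ultimately show "L2_set v J * L2_set (\<lambda>_. 1) J \<le> 1 * sqrt (real (card J))"
      using mult_right_mono[of "L2_set v J" 1 "sqrt (real (card J))"] by simp
  qed (use ahi t in auto)
  finally have L: "L2_set (\<lambda>r. mat_vec p D0 a0 r - mat_vec p D a0 r) {..<m} \<le> sqrt (real (card J)) * ahi * t'"
    by (simp add: mult_ac)
  have "(\<Sum>r<m. (mat_vec p D0 a0 r - mat_vec p D a0 r)\<^sup>2) = (L2_set (\<lambda>r. mat_vec p D0 a0 r - mat_vec p D a0 r) {..<m})\<^sup>2"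
    unfolding L2_set_def by (simp add: sum_nonneg)
  also have "\<dots> \<le> (sqrt (real (card J)) * ahi * t')\<^sup>2"
    using L by (intro power_mono) (auto simp: L2_set_def sum_nonneg)
  finally show ?thesis unfolding D_def .
qed



theorem proposition4:
  fixes M :: "'w measure"
    and m p k :: nat
    and D0 :: "nat \<Rightarrow> nat \<Rightarrow> real"
    and t t' lam alo ahi :: real
    and J :: "'w \<Rightarrow> nat set"
    and a :: "'w \<Rightarrow> nat \<Rightarrow> real"
    and alpha :: "'w \<Rightarrow> real"
    and alpha0 :: "'w \<Rightarrow> nat \<Rightarrow> real"
  assumes "prob_space M"
    and "D0 \<in> dict_set m p"
    and "real k * mu_t m p D0 t < 1/2"
    \<comment> \<open>random support J with |J| = k\<close>
    and "J \<in> measurable M (count_space (Pow {..<p}))"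
    and "\<forall>w\<in>space M. card (J w) = k"
    \<comment> \<open>on J: i.i.d. copies of alpha; support and coefficients independent\<close>
    and "alpha \<in> borel_measurable M"
    and "\<forall>j<p. (\<lambda>w. a w j) \<in> borel_measurable M"
    and "prob_space.indep_vars M (\<lambda>_. borel) (\<lambda>j w. a w j) {..<p}"
    and "\<forall>j<p. distr M borel (\<lambda>w. a w j) = distr M borel alpha"
    and "\<forall>A B. A \<subseteq> Pow {..<p} \<longrightarrow> B \<in> sets (PiM {..<p} (\<lambda>_. borel :: real measure)) \<longrightarrow>
           measure M {w\<in>space M. J w \<in> A \<and> restrict (a w) {..<p} \<in> B} =
           measure M {w\<in>space M. J w \<in> A} * measure M {w\<in>space M. restrict (a w) {..<p} \<in> B}"
    and "\<forall>w\<in>space M. \<forall>j. alpha0 w j = (if j \<in> J w then a w j else 0)"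
    \<comment> \<open>sub-Gaussian alpha\<close>
    and "\<exists>c. \<forall>s. integrable M (\<lambda>w. exp (s * alpha w)) \<and>
            prob_space.expectation M (\<lambda>w. exp (s * alpha w)) \<le> exp (c\<^sup>2 * s\<^sup>2 / 2)"
    \<comment> \<open>Pr(|alpha| < alo) = 0 and Pr(|alpha| > ahi) = 0, with ahi \<ge> alo > 0\<close>
    and "0 < alo" and "alo \<le> ahi"
    and "measure M {w\<in>space M. \<bar>alpha w\<bar> < alo} = 0"
    and "measure M {w\<in>space M. \<bar>alpha w\<bar> > ahi} = 0"
    \<comment> \<open>regularisation parameter and t'\<close>
    and "sqrt (real k) * ahi / (2 - (Q_t m p D0 k t)\<^sup>2) * t < lam"
    and "lam \<le> 4/9 * alo"
    and "0 \<le> t'" and "t' \<le> t"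
  shows "AE w in M. \<forall>W v. W \<in> W_set m p D0 \<longrightarrow> v \<in> unit_sphere_p p \<longrightarrow>
           (let D = D_path D0 W v t';
                x = mat_vec p D0 (alpha0 w);
                ah = alpha_hat m D (J w) x lam (alpha0 w)
            in unique_lasso_solution m p D x lam ah \<and>
               (\<forall>j<p. sgn (ah j) = sgn (alpha0 w j)))"
proof -
  interpret P: prob_space M by (rule assms(1))
  have S1: "{x::real. \<bar>x\<bar> < alo} \<in> sets borel"
    by (intro borel_open open_Collect_less) (auto intro: continuous_intros)
  have S2: "{x::real. ahi < \<bar>x\<bar>} \<in> sets borel"
    by (intro borel_open open_Collect_less) (auto intro: continuous_intros)
  have transfer: "measure M {w\<in>space M. a w j \<in> S} = measure M {w\<in>space M. alpha w \<in> S}"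
    if j: "j < p" and S: "S \<in> sets borel" for j S
  proof -
    have f: "(\<lambda>w. a w j) \<in> borel_measurable M" using assms(7) j by auto
    have d: "distr M borel (\<lambda>w. a w j) = distr M borel alpha" using assms(9) j by auto
    have "measure M {w\<in>space M. a w j \<in> S} = measure M ((\<lambda>w. a w j) -` S \<inter> space M)"
      by (intro arg_cong[where f="measure M"]) auto
    also have "\<dots> = measure (distr M borel (\<lambda>w. a w j)) S" using measure_distr[OF f S] by simp
    also have "\<dots> = measure (distr M borel alpha) S" using d by simp
    also have "\<dots> = measure M (alpha -` S \<inter> space M)" using measure_distr[OF assms(6) S] by simp
    also have "\<dots> = measure M {w\<in>space M. alpha w \<in> S}"
      by (intro arg_cong[where f="measure M"]) auto
    finally show ?thesis .
  qed
  have ae0: "AE w in M. a w j \<notin> S"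
    if j: "j < p" and S: "S \<in> sets borel" and m0: "measure M {w\<in>space M. alpha w \<in> S} = 0" for j S
  proof (rule AE_I')
    have f: "(\<lambda>w. a w j) \<in> borel_measurable M" using assms(7) j by auto
    have N: "{w\<in>space M. a w j \<in> S} \<in> sets M"
    proof -
      have "(\<lambda>w. a w j) -` S \<inter> space M \<in> sets M" by (rule measurable_sets[OF f S])
      moreover have "(\<lambda>w. a w j) -` S \<inter> space M = {w\<in>space M. a w j \<in> S}" by auto
      ultimately show ?thesis by simp
    qed
    have "measure M {w\<in>space M. a w j \<in> S} = 0" using transfer[OF j S] m0 by simp
    thus "{w\<in>space M. a w j \<in> S} \<in> null_sets M" 
      using N P.emeasure_eq_measure[of "{w\<in>space M. a w j \<in> S}"] by (intro null_setsI) simp_all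
  qed auto
  have lo: "AE w in M. \<forall>j\<in>{..<p}. alo \<le> \<bar>a w j\<bar>"
  proof (rule AE_finite_allI)
    fix j assume "j \<in> {..<p}"
    hence "AE w in M. a w j \<notin> {x. \<bar>x\<bar> < alo}" by (intro ae0 S1) (use assms(15) in auto)
    thus "AE w in M. alo \<le> \<bar>a w j\<bar>" by (rule AE_mp) auto
  qed simp
  have hi: "AE w in M. \<forall>j\<in>{..<p}. \<bar>a w j\<bar> \<le> ahi"
  proof (rule AE_finite_allI)
    fix j assume "j \<in> {..<p}"
    hence "AE w in M. a w j \<notin> {x. ahi < \<bar>x\<bar>}" by (intro ae0 S2) (use assms(16) in auto)
    thus "AE w in M. \<bar>a w j\<bar> \<le> ahi" by (rule AE_mp) auto
  qed simp
  define mu where "mu = mu_t m p D0 t"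
  define q where "q = 1 - real k * mu"
  have t0: "0 \<le> t" using assms(19,20) by linarith
  have mu0: "0 \<le> mu" unfolding mu_def mu_t_def using coherence_nonneg[of m p D0] t0 by simp
  have q0: "1/2 < q" using assms(3) unfolding q_def mu_def by simp
  have Qsq: "(Q_t m p D0 k t)\<^sup>2 = 1 / q"
    unfolding Q_t_def q_def mu_def using q0 unfolding q_def mu_def
    by (simp add: power_divide)
  define X where "X = sqrt (real k) * ahi"
  have ahi0: "0 \<le> ahi" using assms(13,14) by simp
  have X0: "0 \<le> X" unfolding X_def using ahi0 by simp
  have pos: "0 < 2 - 1 / q" using q0 by (simp add: field_simps)
  have lamb: "X / (2 - 1/q) * t < lam" using assms(17) Qsq unfolding X_def by simp
  have lam0: "0 < lam"
  proof -
    have "0 \<le> X / (2 - 1/q) * t" using X0 pos t0 by simp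
    thus ?thesis using lamb by linarith
  qed
  have Xt: "X * t < lam * (2 - 1/q)"
  proof -
    have "X * t = (X / (2 - 1/q) * t) * (2 - 1/q)" using pos by (simp add: field_simps)
    also have "\<dots> < lam * (2 - 1/q)" using lamb pos by (rule mult_strict_right_mono)
    finally show ?thesis .
  qed
  have Elam: "(X * t') * q < lam * (1 - 2 * (real k * mu))"
  proof -
    have "(X * t') * q \<le> (X * t) * q" using X0 q0 assms(20) by (intro mult_right_mono mult_left_mono) auto
    also have "\<dots> < lam * (2 - 1/q) * q" using Xt q0 by (intro mult_strict_right_mono) auto
    also have "\<dots> = lam * (1 - 2 * (real k * mu))" using q0 unfolding q_def by (simp add: field_simps)
    finally show ?thesis .
  qed
  show ?thesis
    using AE_space lo hi
  proof eventually_elim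
    case (elim w)
    have Jw: "J w \<subseteq> {..<p}" using measurable_space[OF assms(4) elim(1)] by auto
    have fin: "finite (J w)" using Jw finite_subset by blast
    have card: "card (J w) = k" using assms(5) elim(1) by auto
    have a0z: "\<forall>j. j \<notin> J w \<longrightarrow> alpha0 w j = 0" using assms(11) elim(1) by auto
    have a0J: "alpha0 w j = a w j" if "j \<in> J w" for j using assms(11) elim(1) that by auto
    have a0lo: "\<forall>j\<in>J w. alo \<le> \<bar>alpha0 w j\<bar>" using elim(2) Jw a0J by auto
    have a0hi: "\<forall>j\<in>J w. \<bar>alpha0 w j\<bar> \<le> ahi" using elim(3) Jw a0J by auto
    show ?case
    proof (intro allI impI)
      fix W v assume W: "W \<in> W_set m p D0" and v: "v \<in> unit_sphere_p p"
      define D where "D = D_path D0 W v t'"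
      have unit: "\<forall>j<p. inner_cols m D D j j = 1" unfolding D_def using dpath_unit[OF assms(2) W] by auto
      have coh: "\<forall>i<p. \<forall>j\<in>J w. i \<noteq> j \<longrightarrow> \<bar>inner_cols m D D i j\<bar> \<le> mu"
      proof (intro allI impI ballI)
        fix i j assume i: "i < p" and j: "j \<in> J w" and ij: "i \<noteq> j"
        have "\<bar>inner_cols m D D i j\<bar> \<le> coherence m p D0 + 3 * t'"
          unfolding D_def by (rule dpath_coh[OF assms(2) W v assms(19) i _ ij]) (use Jw j in auto)
        also have "\<dots> \<le> mu" unfolding mu_def mu_t_def using assms(20) by simp
        finally show "\<bar>inner_cols m D D i j\<bar> \<le> mu" .
      qed
      have eE: "(\<Sum>r<m. (mat_vec p D0 (alpha0 w) r - mat_vec p D (alpha0 w) r)\<^sup>2) \<le> (X * t')\<^sup>2"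
        using dpath_err[OF assms(2) W v assms(19) fin Jw a0z a0hi ahi0] unfolding D_def X_def card by simp
      have E0: "0 \<le> X * t'" using X0 assms(19) by simp
      have nu: "real (card (J w)) * mu < 1/2" using assms(3) card unfolding mu_def by simp
      have Elam': "(X * t') * (1 - real (card (J w)) * mu) < lam * (1 - 2 * (real (card (J w)) * mu))"
        using Elam card unfolding q_def by simp
      have res: "unique_lasso_solution m p D (mat_vec p D0 (alpha0 w)) lam (alpha_hat m D (J w) (mat_vec p D0 (alpha0 w)) lam (alpha0 w)) \<and>
         (\<forall>j<p. sgn (alpha_hat m D (J w) (mat_vec p D0 (alpha0 w)) lam (alpha0 w) j) = sgn (alpha0 w j))"
        by (rule det_main[OF fin Jw unit coh mu0 nu a0z a0lo eE E0 Elam' lam0 assms(18)])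
      thus "let D = D_path D0 W v t'; x = mat_vec p D0 (alpha0 w); ah = alpha_hat m D (J w) x lam (alpha0 w)
            in unique_lasso_solution m p D x lam ah \<and> (\<forall>j<p. sgn (ah j) = sgn (alpha0 w j))"
        unfolding D_def Let_def by simp
    qed
  qed
qed

end
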